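(* For every integer $x\ge 3$, $$s^-(x+1)\;\ge\;s^-(x)+\frac{\log 2}{x}.$$
   Context: A square is a nonempty word of the form $uu$; a word is square-free if no contiguous subword of it is a square. $\omega_n^-(x)$ is the number of square-free words of length $n$ over an $x$-letter alphabet and $s^-(x)=\lim_{n\to\infty}\frac1n\log\omega_n^-(x)$ (this limit exists). *)

theory Defs
  imports "HOL-Analysis.Analysis"
begin

definition is_square :: "'a list \<Rightarrow> bool" where
  "is_square w \<longleftrightarrow> (\<exists>u. u \<noteq> [] \<and> w = u @ u)"

definition square_free :: "'a list \<Rightarrow> bool" where
  "square_free w \<longleftrightarrow> \<not> (\<exists>p u s. w = p @ u @ s \<and> is_square u)"

definition omega_minus :: "nat \<Rightarrow> nat \<Rightarrow> nat" where
  "omega_minus n x = card {w :: nat list. length w = n \<and> set w \<subseteq> {0..<x} \<and> square_free w}"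

definition s_minus :: "nat \<Rightarrow> real" where
  "s_minus x = lim (\<lambda>n. ln (real (omega_minus n x)) / real n)"

end

theory Submission
  imports Defs
begin


lemma fekete:
  fixes a :: "nat \<Rightarrow> real"
  assumes a0: "a 0 = 0" and nn: "\<And>n. a n \<ge> 0" and sub: "\<And>m n. a (m+n) \<le> a m + a n"
  shows "(\<lambda>n. a n / real n) \<longlonglongrightarrow> Inf ((\<lambda>n. a n / real n) ` {1..})"
    and "\<And>n. n \<ge> 1 \<Longrightarrow> Inf ((\<lambda>n. a n / real n) ` {1..}) \<le> a n / real n"
proof -
  define L where "L = Inf ((\<lambda>n. a n / real n) ` {1..})"
  have bdd: "bdd_below ((\<lambda>n. a n / real n) ` {1..})"
    by (rule bdd_belowI[where m=0]) (auto simp: nn)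
  have low: "L \<le> a n / real n" if "n \<ge> 1" for n
    unfolding L_def using bdd that by (intro cInf_lower) auto
  then show "\<And>n. n \<ge> 1 \<Longrightarrow> Inf ((\<lambda>n. a n / real n) ` {1..}) \<le> a n / real n"
    unfolding L_def by blast
  have mult: "a (q*k) \<le> real q * a k" for q k
  proof (induction q)
    case 0 then show ?case using a0 by simp
  next
    case (Suc q)
    have "a (Suc q * k) = a (k + q*k)" by simp
    also have "\<dots> \<le> a k + a (q*k)" by (rule sub)
    also have "\<dots> \<le> a k + real q * a k" using Suc by simp
    finally show ?case by (simp add: algebra_simps)
  qed
  have "(\<lambda>n. a n / real n) \<longlonglongrightarrow> L"
  proof (rule order_tendstoI)
    fix y assume "y < L"
    then show "eventually (\<lambda>n. y < a n / real n) sequentially"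
      using low by (intro eventually_sequentiallyI[of 1]) (auto intro: less_le_trans)
  next
    fix y assume yL: "L < y"
    define e where "e = (y - L) / 2"
    have e: "e > 0" using yL by (simp add: e_def)
    have "L < L + e" using e by simp
    then obtain k where k1: "k \<ge> 1" and kL: "a k / real k < L + e"
      unfolding L_def using bdd by (subst (asm) cInf_less_iff) auto
    define M where "M = (\<Sum>r<k. a r)"
    have M0: "M \<ge> 0" unfolding M_def by (simp add: nn sum_nonneg)
    have aM: "a r \<le> M" if "r < k" for r
      unfolding M_def using that by (intro member_le_sum) (auto simp: nn)
    obtain N :: nat where N: "M / e < real N" using reals_Archimedean2 by blast
    show "eventually (\<lambda>n. a n / real n < y) sequentially"
    proof (rule eventually_sequentiallyI[of "max N 1"])
      fix n assume n: "max N 1 \<le> n"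
      define q where "q = n div k"
      define r where "r = n mod k"
      have nqr: "n = q*k + r" unfolding q_def r_def by simp
      have rk: "r < k" unfolding r_def using k1 by simp
      have "a n \<le> a (q*k) + a r" using nqr sub by metis
      also have "\<dots> \<le> real q * a k + M" using mult[of q k] aM[OF rk] by linarith
      also have "real q * a k = real (q*k) * (a k / real k)" using k1 by simp
      also have "real (q*k) * (a k / real k) \<le> real n * (a k / real k)"
        using nqr nn[of k] k1 by (intro mult_right_mono) auto
      finally have an: "a n \<le> real n * (a k / real k) + M" by simp
      have npos: "real n > 0" using n by simp
      have "M < e * real N" using N e by (simp add: field_simps)
      also have "\<dots> \<le> e * real n" using n e by simp
      finally have Mn: "M < e * real n" .
      have "a n / real n \<le> a k / real k + M / real n"
        using an npos by (simp add: field_simps)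
      also have "M / real n < e" using Mn npos by (simp add: field_simps)
      then have "a k / real k + M / real n < L + e + e" using kL by linarith
      finally show "a n / real n < y" unfolding e_def by simp
    qed
  qed
  then show "(\<lambda>n. a n / real n) \<longlonglongrightarrow> Inf ((\<lambda>n. a n / real n) ` {1..})"
    unfolding L_def .
qed



definition SF :: "nat \<Rightarrow> nat \<Rightarrow> nat list set" where
  "SF k n = {w. length w = n \<and> set w \<subseteq> {0..<k} \<and> square_free w}"

lemma omega_SF: "omega_minus n k = card (SF k n)"
  unfolding omega_minus_def SF_def by (simp add: conj_commute)

lemma SF_finite: "finite (SF k n)"
proof -
  have "SF k n \<subseteq> {w. set w \<subseteq> {0..<k} \<and> length w = n}" unfolding SF_def by auto
  moreover have "finite {w. set w \<subseteq> {0..<k} \<and> length w = n}"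
    by (rule finite_lists_length_eq) simp
  ultimately show ?thesis by (rule finite_subset)
qed

lemma sf_factor: "square_free (p @ w @ s) \<Longrightarrow> square_free w"
  unfolding square_free_def
  by (metis append.assoc)

lemma sf_take: "square_free w \<Longrightarrow> square_free (take m w)"
  using sf_factor[of "[]" "take m w" "drop m w"] by simp

lemma sf_drop: "square_free w \<Longrightarrow> square_free (drop m w)"
  using sf_factor[of "take m w" "drop m w" "[]"] by simp

lemma sf_Nil: "square_free []"
  unfolding square_free_def is_square_def by auto

lemma SF_0: "SF k 0 = {[]}"
  unfolding SF_def using sf_Nil by auto

lemma omega_0: "omega_minus 0 k = 1"
  unfolding omega_SF SF_0 by simp

lemma submult: "omega_minus (m+n) k \<le> omega_minus m k * omega_minus n k"
proof -
  have "card (SF k (m+n)) \<le> card (SF k m \<times> SF k n)"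
  proof (rule card_inj_on_le[where f="\<lambda>w. (take m w, drop m w)"])
    show "inj_on (\<lambda>w. (take m w, drop m w)) (SF k (m + n))"
      by (rule inj_onI) (metis append_take_drop_id prod.inject)
    show "(\<lambda>w. (take m w, drop m w)) ` SF k (m + n) \<subseteq> SF k m \<times> SF k n"
      unfolding SF_def by (auto simp: sf_take sf_drop dest: in_set_takeD in_set_dropD)
    show "finite (SF k m \<times> SF k n)" by (simp add: SF_finite)
  qed
  then show ?thesis unfolding omega_SF by (simp add: card_cartesian_product)
qed

lemma zero_prop:
  assumes "omega_minus N k = 0" "n \<ge> N" shows "omega_minus n k = 0"
proof (rule ccontr)
  assume "omega_minus n k \<noteq> 0"
  then obtain w where w: "w \<in> SF k n" unfolding omega_SF by fastforce
  then have "take N w \<in> SF k N" using assms(2) unfolding SF_def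
    by (auto simp: sf_take dest: in_set_takeD)
  then show False using assms(1) SF_finite unfolding omega_SF by (simp add: card_eq_0_iff)
qed

lemma growth:
  assumes pos: "\<And>n. 0 < omega_minus n k"
  shows "s_minus k = Inf ((\<lambda>n. ln (real (omega_minus n k)) / real n) ` {1..})"
    and "\<And>n. real n * s_minus k \<le> ln (real (omega_minus n k))"
proof -
  define a where "a n = ln (real (omega_minus n k))" for n
  have a0: "a 0 = 0" unfolding a_def omega_0 by simp
  have nn: "a n \<ge> 0" for n unfolding a_def using pos[of n] by simp
  have sub: "a (m+n) \<le> a m + a n" for m n
  proof -
    have "real (omega_minus (m+n) k) \<le> real (omega_minus m k) * real (omega_minus n k)"
      using submult[of m n k] by (metis of_nat_le_iff of_nat_mult)
    then have "ln (real (omega_minus (m+n) k)) \<le> ln (real (omega_minus m k) * real (omega_minus n k))"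
      using pos[of "m+n"] by simp
    then show ?thesis unfolding a_def using pos[of m] pos[of n] by (simp add: ln_mult)
  qed
  note F = fekete[of a, OF a0 nn sub]
  have "s_minus k = Inf ((\<lambda>n. a n / real n) ` {1..})"
    unfolding s_minus_def using F(1) unfolding a_def by (rule limI)
  then show s: "s_minus k = Inf ((\<lambda>n. ln (real (omega_minus n k)) / real n) ` {1..})"
    unfolding a_def .
  fix n
  show "real n * s_minus k \<le> ln (real (omega_minus n k))"
  proof (cases "n = 0")
    case True then show ?thesis by (simp add: omega_0)
  next
    case False
    then have "s_minus k \<le> a n / real n" using F(2)[of n] s unfolding a_def by simp
    then show ?thesis using False unfolding a_def by (simp add: field_simps)
  qed
qed

lemma zero_case:
  assumes "omega_minus N k = 0" shows "s_minus k = 0"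
proof -
  have "(\<lambda>n. ln (real (omega_minus n k)) / real n) \<longlonglongrightarrow> 0"
    by (rule tendsto_eventually, rule eventually_sequentiallyI[of N]) (simp add: zero_prop[OF assms])
  then show ?thesis unfolding s_minus_def by (rule limI)
qed



lemma square_suffix:
  assumes "square_free w" "\<not> square_free (w @ [a])"
  shows "\<exists>p r. w @ [a] = p @ r @ r \<and> r \<noteq> []"
proof -
  obtain p u s where v: "w @ [a] = p @ u @ s" and sq: "is_square u"
    using assms(2) unfolding square_free_def by blast
  obtain r where r: "r \<noteq> []" "u = r @ r" using sq unfolding is_square_def by blast
  show ?thesis
  proof (cases s rule: rev_exhaust)
    case Nil then show ?thesis using v r by auto
  next
    case (snoc s' b)
    then have "w = p @ u @ s'" using v by simp
    then show ?thesis using assms(1) sq unfolding square_free_def by blast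
  qed
qed

lemma key_count:
  "k * omega_minus n k \<le> omega_minus (Suc n) k + (\<Sum>j\<in>{1..n}. omega_minus j k)"
proof -
  define E where "E = (\<lambda>(w,a). w @ [a]) ` (SF k n \<times> {0..<k})"
  have cardE: "card E = omega_minus n k * k"
    unfolding E_def omega_SF
    by (subst card_image) (auto simp: inj_on_def card_cartesian_product)
  have finE: "finite E" unfolding E_def by (simp add: SF_finite)
  define Bad where "Bad i = {v \<in> E. \<exists>p r. v = p @ r @ r \<and> length r = i}" for i
  have sub: "E \<subseteq> SF k (Suc n) \<union> (\<Union>i\<in>{1..n}. Bad i)"
  proof
    fix v assume "v \<in> E"
    then obtain w a where wa: "v = w @ [a]" "w \<in> SF k n" "a < k" unfolding E_def by auto
    show "v \<in> SF k (Suc n) \<union> (\<Union>i\<in>{1..n}. Bad i)"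
    proof (cases "square_free v")
      case True then show ?thesis using wa unfolding SF_def by auto
    next
      case False
      then obtain p r where pr: "v = p @ r @ r" "r \<noteq> []"
        using square_suffix[of w a] wa unfolding SF_def by auto
      have "length v = Suc n" using wa unfolding SF_def by simp
      then have "length r \<in> {1..n}" using pr by (cases r) auto
      then show ?thesis using pr \<open>v \<in> E\<close> unfolding Bad_def by blast
    qed
  qed
  have badc: "card (Bad i) \<le> omega_minus (Suc n - i) k" if i: "i \<in> {1..n}" for i
    unfolding omega_SF
  proof (rule card_inj_on_le[where f="take (Suc n - i)"])
    show "inj_on (take (Suc n - i)) (Bad i)"
    proof (rule inj_onI)
      fix v1 v2 assume v1: "v1 \<in> Bad i" and v2: "v2 \<in> Bad i"
        and eq: "take (Suc n - i) v1 = take (Suc n - i) v2"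
      obtain p1 r1 where pr1: "v1 = p1 @ r1 @ r1" "length r1 = i" "v1 \<in> E"
        using v1 unfolding Bad_def by blast
      obtain p2 r2 where pr2: "v2 = p2 @ r2 @ r2" "length r2 = i" "v2 \<in> E"
        using v2 unfolding Bad_def by blast
      have l1: "length v1 = Suc n" using pr1(3) unfolding E_def SF_def by auto
      have l2: "length v2 = Suc n" using pr2(3) unfolding E_def SF_def by auto
      have t1: "take (Suc n - i) v1 = p1 @ r1" using l1 pr1 by simp
      have t2: "take (Suc n - i) v2 = p2 @ r2" using l2 pr2 by simp
      have "p1 @ r1 = p2 @ r2" using eq t1 t2 by simp
      then have "p1 = p2 \<and> r1 = r2" using pr1(2) pr2(2) by (simp add: append_eq_append_conv)
      then show "v1 = v2" using pr1 pr2 by simp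
    qed
    show "take (Suc n - i) ` Bad i \<subseteq> SF k (Suc n - i)"
    proof
      fix t assume "t \<in> take (Suc n - i) ` Bad i"
      then obtain v where v: "v \<in> Bad i" "t = take (Suc n - i) v" by blast
      then have "v \<in> E" unfolding Bad_def by blast
      then obtain w a where wa: "v = w @ [a]" "w \<in> SF k n" "a < k"
        unfolding E_def by auto
      have lw: "length w = n" using wa unfolding SF_def by simp
      have "Suc n - i \<le> n" using i by auto
      then have "t = take (Suc n - i) w" using v(2) wa(1) lw by (simp add: take_append)
      then show "t \<in> SF k (Suc n - i)" using wa i unfolding SF_def
        by (auto simp: sf_take dest: in_set_takeD)
    qed
    show "finite (SF k (Suc n - i))" by (rule SF_finite)
  qed
  have "omega_minus n k * k = card E" using cardE by simp
  also have "\<dots> \<le> card (SF k (Suc n) \<union> (\<Union>i\<in>{1..n}. Bad i))"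
    using sub by (intro card_mono) (auto simp: SF_finite Bad_def finE)
  also have "\<dots> \<le> card (SF k (Suc n)) + card (\<Union>i\<in>{1..n}. Bad i)" by (rule card_Un_le)
  also have "card (\<Union>i\<in>{1..n}. Bad i) \<le> (\<Sum>i\<in>{1..n}. card (Bad i))" by (rule card_UN_le) simp
  also have "\<dots> \<le> (\<Sum>i\<in>{1..n}. omega_minus (Suc n - i) k)" by (rule sum_mono) (rule badc)
  also have "\<dots> = (\<Sum>j\<in>{1..n}. omega_minus j k)"
    by (subst sum.atLeastAtMost_rev) (auto intro!: sum.cong)
  finally show ?thesis unfolding omega_SF by (simp add: mult.commute)
qed

lemma exp_growth:
  assumes k: "k \<ge> 4"
  shows "(\<Sum>j\<le>n. omega_minus j k) \<le> 2 * omega_minus n k \<and> 2^n \<le> omega_minus n k"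
proof (induction n)
  case 0 then show ?case by (simp add: omega_0)
next
  case (Suc n)
  have "4 * omega_minus n k \<le> k * omega_minus n k" using k by simp
  also have "\<dots> \<le> omega_minus (Suc n) k + (\<Sum>j\<in>{1..n}. omega_minus j k)" by (rule key_count)
  also have "(\<Sum>j\<in>{1..n}. omega_minus j k) \<le> (\<Sum>j\<le>n. omega_minus j k)"
    by (rule sum_mono2) auto
  finally have "4 * omega_minus n k \<le> omega_minus (Suc n) k + 2 * omega_minus n k" using Suc by linarith
  then have "2 * omega_minus n k \<le> omega_minus (Suc n) k" by linarith
  then show ?case using Suc by simp
qed

lemma upper_count:
  assumes "x \<ge> 1"
  shows "omega_minus (Suc n) x \<le> x * (x - 1)^n"
proof (induction n)
  case 0
  have "SF x 1 \<subseteq> (\<lambda>a. [a]) ` {0..<x}"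
  proof
    fix v assume "v \<in> SF x 1"
    then obtain a where "v = [a]" "a < x" unfolding SF_def by (auto simp: length_Suc_conv)
    then show "v \<in> (\<lambda>a. [a]) ` {0..<x}" by auto
  qed
  then have "card (SF x 1) \<le> card ((\<lambda>a. [a]) ` {0..<x})" by (intro card_mono) auto
  also have "\<dots> \<le> x" using card_image_le[of "{0..<x}" "\<lambda>a. [a]"] by simp
  finally show ?case unfolding omega_SF by simp
next
  case (Suc n)
  define S where "S = Sigma (SF x (Suc n)) (\<lambda>w. {0..<x} - {last w})"
  have "SF x (Suc (Suc n)) \<subseteq> (\<lambda>(w,a). w @ [a]) ` S"
  proof
    fix v assume v: "v \<in> SF x (Suc (Suc n))"
    obtain w a where wa: "v = w @ [a]" using v unfolding SF_def by (cases v rule: rev_exhaust) auto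
    obtain u b where ub: "w = u @ [b]" using v wa unfolding SF_def by (cases w rule: rev_exhaust) auto
    have "a \<noteq> b"
    proof
      assume "a = b"
      then have "v = u @ [b] @ [b] @ []" using wa ub by simp
      then show False using v unfolding SF_def square_free_def is_square_def by blast
    qed
    moreover have "w \<in> SF x (Suc n)" using v wa unfolding SF_def
      by (auto dest: sf_factor[of "[]" w "[a]", simplified])
    moreover have "a < x" using v wa unfolding SF_def by auto
    ultimately show "v \<in> (\<lambda>(w,a). w @ [a]) ` S" unfolding S_def using wa ub by force
  qed
  then have "card (SF x (Suc (Suc n))) \<le> card ((\<lambda>(w,a). w @ [a]) ` S)"
    by (intro card_mono) (auto simp: S_def SF_finite)
  also have "\<dots> \<le> card S" by (rule card_image_le) (auto simp: S_def SF_finite)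
  also have "card S = (\<Sum>w\<in>SF x (Suc n). card ({0..<x} - {last w}))"
    unfolding S_def by (rule card_SigmaI) (auto simp: SF_finite)
  also have "\<dots> = (\<Sum>w\<in>SF x (Suc n). x - 1)"
  proof (rule sum.cong)
    fix w assume "w \<in> SF x (Suc n)"
    then have "last w \<in> {0..<x}" unfolding SF_def
      by (metis (mono_tags, lifting) last_in_set length_0_conv mem_Collect_eq nat.distinct(1) subsetD)
    then show "card ({0..<x} - {last w}) = x - 1" by simp
  qed simp
  also have "\<dots> = omega_minus (Suc n) x * (x - 1)" unfolding omega_SF by simp
  also have "\<dots> \<le> x * (x-1)^n * (x - 1)" using Suc by simp
  finally show ?case unfolding omega_SF by (simp add: ac_simps)
qed



fun noTT :: "bool list \<Rightarrow> bool" where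
  "noTT [] = True"
| "noTT [a] = True"
| "noTT (a # b # r) = (\<not> (a \<and> b) \<and> noTT (b # r))"

lemma noTT_tl: "noTT (a # l) \<Longrightarrow> noTT l"
  by (cases l) auto

lemma noTT_False: "noTT (False # l) = noTT l"
  by (cases l) auto

lemma noTT_TT: "\<not> noTT (p @ [True, True] @ s)"
proof (induction p)
  case Nil then show ?case by simp
next
  case (Cons a p) then show ?case using noTT_tl[of a "p @ [True, True] @ s"] by auto
qed

lemma insertion_sf:
  assumes sf: "square_free (filter (\<lambda>c. c \<noteq> z) v)" and nt: "noTT (map (\<lambda>c. c = z) v)"
  shows "square_free v"
proof (rule ccontr)
  assume "\<not> square_free v"
  then obtain p u s where v: "v = p @ u @ s" and sq: "is_square u"
    unfolding square_free_def by blast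
  obtain r where r: "r \<noteq> []" "u = r @ r" using sq unfolding is_square_def by blast
  let ?P = "\<lambda>c. c \<noteq> z"
  have fv: "filter ?P v = filter ?P p @ (filter ?P r @ filter ?P r) @ filter ?P s"
    using v r by simp
  have "filter ?P r = []"
  proof (rule ccontr)
    assume "filter ?P r \<noteq> []"
    then have "is_square (filter ?P r @ filter ?P r)" unfolding is_square_def by blast
    then show False using sf fv unfolding square_free_def by blast
  qed
  then have allz: "\<forall>c\<in>set r. c = z" by (simp add: filter_empty_conv)
  obtain r1 c where rc: "r = r1 @ [c]" using r(1) by (cases r rule: rev_exhaust) auto
  obtain d r2 where rd: "r = d # r2" using r(1) by (cases r) auto
  have "c \<in> set r" using rc by simp
  moreover have "d \<in> set r" using rd by simp
  ultimately
  have "c = z" "d = z" using allz by blast+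
  have rr: "r @ r = (r1 @ [c]) @ (d # r2)"
    by (subst rc[symmetric], subst rd[symmetric]) (rule refl)
  have "v = (p @ r1) @ [z, z] @ (r2 @ s)" using v r(2) rr \<open>c = z\<close> \<open>d = z\<close> by simp
  then have "map (\<lambda>c. c = z) v = map (\<lambda>c. c = z) (p @ r1) @ [True, True] @ map (\<lambda>c. c = z) (r2 @ s)"
    by simp
  then have "noTT (map (\<lambda>c. c = z) (p @ r1) @ [True, True] @ map (\<lambda>c. c = z) (r2 @ s))"
    using nt by (simp only:)
  then show False using noTT_TT by blast
qed

fun merge :: "nat \<Rightarrow> bool list \<Rightarrow> nat list \<Rightarrow> nat list" where
  "merge z [] w = []"
| "merge z (True # b) w = z # merge z b w"
| "merge z (False # b) w = hd w # merge z b (tl w)"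

definition cF :: "bool list \<Rightarrow> nat" where "cF b = length (filter Not b)"

lemma merge_length: "length (merge z b w) = length b"
  by (induction z b w rule: merge.induct) auto

lemma merge_props:
  "length w = cF b \<Longrightarrow> set w \<subseteq> {0..<z} \<Longrightarrow>
    map (\<lambda>c. c = z) (merge z b w) = b \<and> filter (\<lambda>c. c \<noteq> z) (merge z b w) = w
    \<and> set (merge z b w) \<subseteq> {0..<Suc z}"
proof (induction z b w rule: merge.induct)
  case (1 z w) then show ?case by (simp add: cF_def)
next
  case (2 z b w) then show ?case by (auto simp: cF_def)
next
  case (3 z b w)
  then obtain h t where w: "w = h # t" by (cases w) (auto simp: cF_def)
  then show ?case using 3 by (auto simp: cF_def)
qed

definition BB :: "nat \<Rightarrow> bool list set" where
  "BB m = {b. length b = m \<and> noTT b}"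

lemma BB_finite: "finite (BB m)"
proof -
  have "BB m \<subseteq> {b. set b \<subseteq> UNIV \<and> length b = m}" unfolding BB_def by auto
  moreover have "finite {b :: bool list. set b \<subseteq> UNIV \<and> length b = m}"
    by (rule finite_lists_length_eq) simp
  ultimately show ?thesis by (rule finite_subset)
qed

lemma BB_0: "BB 0 = {[]}" unfolding BB_def by auto

lemma BB_1: "BB 1 = {[False], [True]}"
  unfolding BB_def by (auto simp: length_Suc_conv)

lemma BB_SS: "BB (Suc (Suc m)) = Cons False ` BB (Suc m) \<union> (\<lambda>b. True # False # b) ` BB m"
proof (rule set_eqI, rule iffI)
  fix b assume b: "b \<in> BB (Suc (Suc m))"
  then obtain c b' where cb: "b = c # b'" unfolding BB_def by (cases b) auto
  show "b \<in> Cons False ` BB (Suc m) \<union> (\<lambda>b. True # False # b) ` BB m"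
  proof (cases c)
    case False then show ?thesis using b cb unfolding BB_def by (auto simp: noTT_False)
  next
    case True
    obtain d b'' where db: "b' = d # b''" using b cb unfolding BB_def by (cases b') auto
    have "\<not> d" using b cb db True unfolding BB_def by auto
    then have "b'' \<in> BB m" using b cb db unfolding BB_def by (auto simp: noTT_False)
    then show ?thesis using cb db True \<open>\<not> d\<close> by auto
  qed
next
  fix b assume "b \<in> Cons False ` BB (Suc m) \<union> (\<lambda>b. True # False # b) ` BB m"
  then show "b \<in> BB (Suc (Suc m))" unfolding BB_def by (auto simp: noTT_False)
qed



lemma cF_simps: "cF (False # b) = Suc (cF b)" "cF (True # b) = cF b"
  by (auto simp: cF_def)

lemma W_bound:
  fixes E q :: real
  assumes E: "E > 0" and q1: "E * q \<le> E + 1" and q2: "E * (q^2 - q) \<le> 1" and q0: "q \<ge> 0"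
  shows "(\<Sum>b\<in>BB m. E ^ cF b) \<ge> (E*q)^m"
proof -
  define W where "W m = (\<Sum>b\<in>BB m. E ^ cF b)" for m
  have W0: "W 0 = 1" unfolding W_def BB_0 by (simp add: cF_def)
  have W1: "W 1 = E + 1" unfolding W_def BB_1 by (simp add: cF_def)
  have WSS: "W (Suc (Suc m)) = E * W (Suc m) + E * W m" for m
  proof -
    have "W (Suc (Suc m)) = (\<Sum>b\<in>Cons False ` BB (Suc m). E ^ cF b) + (\<Sum>b\<in>(\<lambda>b. True # False # b) ` BB m. E ^ cF b)"
      unfolding W_def BB_SS by (rule sum.union_disjoint) (auto simp: BB_finite)
    also have "\<dots> = (\<Sum>b\<in>BB (Suc m). E ^ cF (False # b)) + (\<Sum>b\<in>BB m. E ^ cF (True # False # b))"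
      by (subst sum.reindex, simp add: inj_on_def, subst sum.reindex, simp add: inj_on_def, simp)
    also have "\<dots> = E * W (Suc m) + E * W m"
      unfolding W_def by (simp add: cF_simps sum_distrib_left)
    finally show ?thesis .
  qed
  have "W m \<ge> (E*q)^m \<and> W (Suc m) \<ge> (E*q)^(Suc m)"
  proof (induction m)
    case 0 then show ?case using W0 W1 q1 by simp
  next
    case (Suc m)
    have Q: "E * q \<ge> 0" using E q0 by simp
    have "(E*q)^(Suc (Suc m)) = (E*q)^m * (E * (E * q^2))" by (simp add: power2_eq_square algebra_simps)
    also have "\<dots> \<le> (E*q)^m * (E * (E*q + 1))"
    proof -
      have "E * q^2 \<le> E*q + 1" using q2 by (simp add: algebra_simps)
      then have "E * (E * q^2) \<le> E * (E*q + 1)" using E by (intro mult_left_mono) auto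
      then show ?thesis using Q by (simp add: mult_left_mono)
    qed
    also have "\<dots> = E * (E*q)^(Suc m) + E * (E*q)^m" by (simp add: algebra_simps)
    also have "\<dots> \<le> E * W (Suc m) + E * W m"
      using Suc.IH E by (intro add_mono mult_left_mono) auto
    finally have "(E*q)^(Suc (Suc m)) \<le> W (Suc (Suc m))" by (simp only: WSS)
    then show ?case using Suc.IH by blast
  qed
  then show ?thesis unfolding W_def by simp
qed

lemma merge_count:
  "(\<Sum>b\<in>BB m. omega_minus (cF b) x) \<le> omega_minus m (Suc x)"
proof -
  define D where "D = Sigma (BB m) (\<lambda>b. SF x (cF b))"
  have mp: "map (\<lambda>c. c = x) (merge x b w) = b \<and> filter (\<lambda>c. c \<noteq> x) (merge x b w) = w
          \<and> set (merge x b w) \<subseteq> {0..<Suc x}" if "(b, w) \<in> D" for b w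
  proof -
    have "length w = cF b" "set w \<subseteq> {0..<x}" using that unfolding D_def SF_def by auto
    then show ?thesis by (rule merge_props)
  qed
  have "card D = (\<Sum>b\<in>BB m. omega_minus (cF b) x)"
    unfolding D_def omega_SF by (rule card_SigmaI) (auto simp: BB_finite SF_finite)
  moreover have "card D \<le> card (SF (Suc x) m)"
  proof (rule card_inj_on_le[where f="\<lambda>(b,w). merge x b w"])
    show "inj_on (\<lambda>(b,w). merge x b w) D"
    proof (rule inj_onI, clarify)
      fix b1 w1 b2 w2 assume d1: "(b1, w1) \<in> D" and d2: "(b2, w2) \<in> D"
        and eq: "merge x b1 w1 = merge x b2 w2"
      have "b1 = b2" using mp[OF d1] mp[OF d2] eq by metis
      moreover have "w1 = w2" using mp[OF d1] mp[OF d2] eq by metis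
      ultimately show "b1 = b2 \<and> w1 = w2" by blast
    qed
    show "(\<lambda>(b,w). merge x b w) ` D \<subseteq> SF (Suc x) m"
    proof clarify
      fix b w assume d: "(b, w) \<in> D"
      then have bw: "b \<in> BB m" "w \<in> SF x (cF b)" unfolding D_def by auto
      note p = mp[OF d]
      have sfw: "square_free (filter (\<lambda>c. c \<noteq> x) (merge x b w))"
        using p bw(2) unfolding SF_def by simp
      have nt: "noTT (map (\<lambda>c. c = x) (merge x b w))"
        using p bw(1) unfolding BB_def by simp
      have "square_free (merge x b w)" by (rule insertion_sf[OF sfw nt])
      moreover have "length (merge x b w) = m" using bw(1) unfolding BB_def by (simp add: merge_length)
      ultimately show "merge x b w \<in> SF (Suc x) m"
        using p unfolding SF_def by simp
    qed
    show "finite (SF (Suc x) m)" by (rule SF_finite)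
  qed
  ultimately show ?thesis unfolding omega_SF by simp
qed



lemma q_facts:
  fixes x :: nat assumes x: "x \<ge> 3"
  shows "exp (ln 2 / real x) \<le> 1 + 1 / real x" and "exp (ln 2 / real x) \<ge> 1"
proof -
  have xp: "real x > 0" using x by simp
  have "1 + real x * (1 / real x) \<le> (1 + 1 / real x) ^ x"
  proof (rule Bernoulli_inequality)
    have "0 \<le> 1 / real x" by simp
    then show "- 1 \<le> 1 / real x" by linarith
  qed
  then have two: "2 \<le> (1 + 1 / real x) ^ x" using xp by simp
  have "ln 2 \<le> ln ((1 + 1 / real x) ^ x)" using two by simp
  also have "\<dots> = real x * ln (1 + 1 / real x)" by (simp add: ln_realpow)
  finally have "ln 2 / real x \<le> ln (1 + 1 / real x)" using xp by (simp add: field_simps)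
  then have "exp (ln 2 / real x) \<le> exp (ln (1 + 1 / real x))" by simp
  also have "\<dots> = 1 + 1 / real x" using xp by (simp add: add_pos_pos)
  finally show "exp (ln 2 / real x) \<le> 1 + 1 / real x" .
  show "exp (ln 2 / real x) \<ge> 1" using xp by simp
qed

lemma s_upper:
  fixes x :: nat assumes x: "x \<ge> 3" and pos: "\<And>n. 0 < omega_minus n x"
  shows "s_minus x \<le> ln (real x - 1)"
proof (rule ccontr)
  define s where "s = s_minus x"
  define l where "l = ln (real x - 1)"
  define C where "C = ln (real x) - l"
  assume "\<not> s_minus x \<le> ln (real x - 1)"
  then have d: "s - l > 0" unfolding s_def l_def by simp
  obtain m :: nat where m: "C / (s - l) < real m" using reals_Archimedean2 by blast
  have x1: "real x - 1 > 0" using x by simp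
  have x1': "real (x - 1) = real x - 1" using x by simp
  have "real (Suc m) * s \<le> ln (real (omega_minus (Suc m) x))"
    unfolding s_def by (rule growth(2)[OF pos])
  also have "\<dots> \<le> ln (real (x * (x - 1)^m))"
  proof -
    have "omega_minus (Suc m) x \<le> x * (x - 1)^m" using upper_count[of x m] x by simp
    then have c: "real (omega_minus (Suc m) x) \<le> real (x * (x - 1)^m)" by (simp only: of_nat_le_iff)
    have p1: "0 < real (omega_minus (Suc m) x)" using pos[of "Suc m"] by simp
    have p2: "0 < real (x * (x - 1)^m)" using x by simp
    show ?thesis using c by (subst ln_le_cancel_iff[OF p1 p2])
  qed
  also have "real (x * (x - 1)^m) = real x * (real x - 1)^m" using x1' by simp
  also have "ln (real x * (real x - 1)^m) = ln (real x) + real m * l"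
    using x x1 unfolding l_def by (simp add: ln_mult ln_realpow)
  finally have h: "real (Suc m) * s \<le> ln (real x) + real m * l" .
  have "C < real m * (s - l)" using m d by (simp add: field_simps)
  also have "\<dots> \<le> real (Suc m) * (s - l)" using d by (intro mult_right_mono) auto
  finally have "C < real (Suc m) * (s - l)" .
  then show False using h unfolding C_def by (simp add: algebra_simps)
qed

theorem mainTheorem9:
  fixes x :: nat
  assumes "x \<ge> 3"
  shows "s_minus (x + 1) \<ge> s_minus x + ln 2 / real x"
proof -
  have x: "x \<ge> 3" by (rule assms)
  have xp: "real x > 0" using x by simp
  have pow1: "2^n \<le> omega_minus n (x+1)" for n using exp_growth[of "x+1" n] x by simp
  have pos1: "0 < omega_minus n (x+1)" for n using pow1[of n] by (meson order_less_le_trans zero_less_numeral zero_less_power)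
  note G1 = growth[OF pos1]
  have ne: "(\<lambda>n. ln (real (omega_minus n (x + 1))) / real n) ` {1..} \<noteq> {}" by auto
  show ?thesis
  proof (cases "\<forall>n. 0 < omega_minus n x")
    case True
    then have pos: "\<And>n. 0 < omega_minus n x" by blast
    define s where "s = s_minus x"
    define E where "E = exp s"
    define q where "q = exp (ln 2 / real x)"
    have Ep: "E > 0" unfolding E_def by simp
    have sl: "s \<le> ln (real x - 1)" unfolding s_def by (rule s_upper[OF x pos])
    have x1p: "real x - 1 > 0" using x by simp
    have "exp (- ln (real x - 1)) \<le> exp (- s)" using sl by simp
    then have yE: "1 / (real x - 1) \<le> 1 / E" unfolding E_def using x1p by (simp add: exp_minus')
    have qu: "q \<le> 1 + 1 / real x" and ql: "q \<ge> 1" unfolding q_def using q_facts[OF x] by auto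
    have "q^2 - q = q * (q - 1)" by (simp add: power2_eq_square algebra_simps)
    also have "\<dots> \<le> (1 + 1 / real x) * (1 / real x)"
      using qu ql by (intro mult_mono) auto
    also have "\<dots> \<le> 1 / (real x - 1)"
      using xp x1p x by (simp add: field_simps power2_eq_square)
    also have "\<dots> \<le> 1 / E" by (rule yE)
    finally have "E * (q^2 - q) \<le> E * (1 / E)" using Ep by (intro mult_left_mono) auto
    then have q2: "E * (q^2 - q) \<le> 1" using Ep by simp
    have "q \<le> 1 + 1 / E"
    proof -
      have "1 / real x \<le> 1 / (real x - 1)" using x1p by (simp add: frac_le)
      then show ?thesis using qu yE by linarith
    qed
    then have "E * q \<le> E * (1 + 1 / E)" using Ep by (intro mult_left_mono) auto
    then have q1: "E * q \<le> E + 1" using Ep by (simp add: algebra_simps)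
    have bnd: "real n * (s + ln 2 / real x) \<le> ln (real (omega_minus n (x+1)))" for n
    proof -
      have "(E*q)^n \<le> (\<Sum>b\<in>BB n. E ^ cF b)"
        by (rule W_bound[OF Ep q1 q2]) (use ql in simp)
      also have "\<dots> \<le> (\<Sum>b\<in>BB n. real (omega_minus (cF b) x))"
      proof (rule sum_mono)
        fix b
        have "real (cF b) * s \<le> ln (real (omega_minus (cF b) x))"
          unfolding s_def by (rule growth(2)[OF pos])
        then have "exp (real (cF b) * s) \<le> exp (ln (real (omega_minus (cF b) x)))" by simp
        then show "E ^ cF b \<le> real (omega_minus (cF b) x)"
          unfolding E_def using pos[of "cF b"] by (simp add: exp_of_nat_mult)
      qed
      also have "\<dots> = real (\<Sum>b\<in>BB n. omega_minus (cF b) x)" by simp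
      also have "\<dots> \<le> real (omega_minus n (x+1))" using merge_count[where m=n and x=x]
        by (simp only: of_nat_le_iff Suc_eq_plus1)
      finally have h: "(E*q)^n \<le> real (omega_minus n (x+1))" .
      have "E * q = exp (s + ln 2 / real x)" unfolding E_def q_def by (simp add: exp_add)
      then have "(E*q)^n = exp (real n * (s + ln 2 / real x))" by (simp add: exp_of_nat_mult)
      then have "exp (real n * (s + ln 2 / real x)) \<le> exp (ln (real (omega_minus n (x+1))))"
        using h pos1[of n] by simp
      then show ?thesis by simp
    qed
    have "s + ln 2 / real x \<le> Inf ((\<lambda>n. ln (real (omega_minus n (x + 1))) / real n) ` {1..})"
    proof (rule cInf_greatest[OF ne])
      fix v assume "v \<in> (\<lambda>n. ln (real (omega_minus n (x + 1))) / real n) ` {1..}"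
      then obtain n where n: "n \<ge> 1" "v = ln (real (omega_minus n (x + 1))) / real n" by auto
      have np: "real n > 0" using n by simp
      have "(s + ln 2 / real x) * real n \<le> ln (real (omega_minus n (x + 1)))"
        using bnd[of n] by (simp only: mult.commute)
      then show "s + ln 2 / real x \<le> v" unfolding n(2) using np by (simp only: le_divide_eq) simp
    qed
    then show ?thesis using G1(1) unfolding s_def by simp
  next
    case False
    then obtain N where "omega_minus N x = 0" by auto
    then have s0: "s_minus x = 0" by (rule zero_case)
    have "ln 2 \<le> Inf ((\<lambda>n. ln (real (omega_minus n (x + 1))) / real n) ` {1..})"
    proof (rule cInf_greatest[OF ne])
      fix v assume "v \<in> (\<lambda>n. ln (real (omega_minus n (x + 1))) / real n) ` {1..}"
      then obtain n where n: "n \<ge> 1" "v = ln (real (omega_minus n (x + 1))) / real n" by auto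
      have "real (2^n) \<le> real (omega_minus n (x+1))" using pow1[of n] by (simp only: of_nat_le_iff)
      then have c: "(2::real)^n \<le> real (omega_minus n (x + 1))" by simp
      have "(0::real) < 2^n" by simp
      then have "ln ((2::real)^n) \<le> ln (real (omega_minus n (x + 1)))"
        using c pos1[of n] by (subst ln_le_cancel_iff) auto
      then have "real n * ln 2 \<le> ln (real (omega_minus n (x + 1)))" by (simp add: ln_realpow)
      then have "ln 2 * real n \<le> ln (real (omega_minus n (x + 1)))" by (simp only: mult.commute)
      moreover have np: "real n > 0" using n by simp
      ultimately show "ln 2 \<le> v" unfolding n(2) by (simp only: le_divide_eq) simp
    qed
    moreover have "ln 2 / real x \<le> ln 2" using x by (simp add: divide_le_eq)
    ultimately show ?thesis using G1(1) s0 by simp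
  qed
qed

end
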